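(* A value function $\mathfrak I:X\times\mathbb B(X)\to\mathbb R$ satisfies (Dic) $\mathfrak I_x(x)=\mathfrak I_x(\overline x)=1$ for all $x\in X$, (Dum) $\mathfrak I_x(f)=0$ whenever $x\notin\mathrm{dep}(f)$, and cofactor-additivity, if and only if $\mathfrak I=\mathbf I$, i.e. $\mathfrak I_x(f)=\mathbb E[\mathrm D_xf]$ for all $x,f$.
   Context: $X$ is a fixed finite set of variables; $\mathbb B(X)$ is the set of Boolean functions $\{0,1\}^X\to\{0,1\}$; a variable $x$ also denotes $\mathbf u\mapsto\mathbf u(x)$ and $\overline f$ is negation. $f_{z/c}$ is the cofactor of $f$ with $z$ fixed to $c$ (regarded again as an element of $\mathbb B(X)$ not depending on $z$). $\mathrm{dep}(f)=\{x: f_{x/1}\ne f_{x/0}\}$; $\mathrm D_xf=f_{x/1}\oplus f_{x/0}$; $\mathbb E$ is the expectation under the uniform distribution on $\{0,1\}^X$. A value function is any map $\mathfrak I:X\times\mathbb B(X)\to\mathbb R$, $(x,f)\mapsto\mathfrak I_x(f)$. It is cofactor-additive if for all $f\in\mathbb B(X)$ and all variables $x\ne z$: $\mathfrak I_x(f)=\tfrac12\mathfrak I_x(f_{z/0})+\tfrac12\mathfrak I_x(f_{z/1})$. *)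

theory Defs
  imports Complex_Main
begin

text \<open>The finite variable set X is the finite type 'x; an assignment is a map 'x \<Rightarrow> bool
  (elements of {0,1}^X), and a Boolean function is a map ('x \<Rightarrow> bool) \<Rightarrow> bool.\<close>

type_synonym 'x bfun = "('x \<Rightarrow> bool) \<Rightarrow> bool"

definition var :: "'x \<Rightarrow> 'x bfun" where
  "var x = (\<lambda>u. u x)"

definition neg :: "'x bfun \<Rightarrow> 'x bfun" where
  "neg f = (\<lambda>u. \<not> f u)"

definition cofactor :: "'x bfun \<Rightarrow> 'x \<Rightarrow> bool \<Rightarrow> 'x bfun" where
  "cofactor f z c = (\<lambda>u. f (u(z := c)))"

definition dep :: "'x bfun \<Rightarrow> 'x set" where
  "dep f = {x. cofactor f x True \<noteq> cofactor f x False}"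

definition bderiv :: "'x \<Rightarrow> 'x bfun \<Rightarrow> 'x bfun" where
  "bderiv x f = (\<lambda>u. cofactor f x True u \<noteq> cofactor f x False u)"

definition expect :: "('x::finite) bfun \<Rightarrow> real" where
  "expect f = (\<Sum>u\<in>(UNIV :: ('x \<Rightarrow> bool) set). of_bool (f u)) / 2 ^ card (UNIV :: 'x set)"

definition cofactor_additive :: "('x \<Rightarrow> 'x bfun \<Rightarrow> real) \<Rightarrow> bool" where
  "cofactor_additive I \<longleftrightarrow>
     (\<forall>f x z. x \<noteq> z \<longrightarrow> I x f = I x (cofactor f z False) / 2 + I x (cofactor f z True) / 2)"

end

theory Submission
  imports Defs "HOL-Library.Cardinality"
begin

lemma expect_const: "expect (\<lambda>_. c :: bool) = (if c then 1 else 0)"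
  by (simp add: expect_def card_fun)

lemma bderiv_var: "bderiv x (var x) = (\<lambda>_. True)"
  by (simp add: bderiv_def cofactor_def var_def)

lemma bderiv_neg: "bderiv x (neg (var x)) = (\<lambda>_. True)"
  by (simp add: bderiv_def cofactor_def var_def neg_def)

lemma bderiv_nodep: "x \<notin> dep f \<Longrightarrow> bderiv x f = (\<lambda>_. False)"
  by (simp add: bderiv_def dep_def)

lemma bderiv_cof: "x \<noteq> z \<Longrightarrow> bderiv x (cofactor f z c) = cofactor (bderiv x f) z c"
  by (simp add: bderiv_def cofactor_def fun_upd_twist)

lemma sum_flip:
  fixes g :: "('x::finite \<Rightarrow> bool) \<Rightarrow> real"
  shows "(\<Sum>u\<in>UNIV. g u) = (\<Sum>u\<in>UNIV. g (u(z := \<not> u z)))"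
  by (rule sum.reindex_bij_witness[where i="\<lambda>u. u(z := \<not> u z)" and j="\<lambda>u. u(z := \<not> u z)"])
     simp_all

lemma expect_split:
  "expect (g :: ('x::finite) bfun) = expect (cofactor g z False) / 2 + expect (cofactor g z True) / 2"
proof -
  let ?g = "\<lambda>u. (of_bool (g u) :: real)"
  let ?N = "(2::real) ^ card (UNIV :: 'x set)"
  have "2 * (\<Sum>u\<in>UNIV. ?g u) = (\<Sum>u\<in>UNIV. ?g u) + (\<Sum>u\<in>UNIV. ?g (u(z := \<not> u z)))"
  proof -
    have "(\<Sum>u\<in>UNIV. ?g u) = (\<Sum>u\<in>UNIV. ?g (u(z := \<not> u z)))" by (rule sum_flip)
    thus ?thesis by linarith
  qed
  also have "\<dots> = (\<Sum>u\<in>UNIV. ?g u + ?g (u(z := \<not> u z)))"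
    by (simp only: sum.distrib)
  also have "\<dots> = (\<Sum>u\<in>UNIV. ?g (u(z := False)) + ?g (u(z := True)))"
  proof (rule sum.cong, simp)
    fix u :: "'x \<Rightarrow> bool"
    show "?g u + ?g (u(z := \<not> u z)) = ?g (u(z := False)) + ?g (u(z := True))"
      by (cases "u z") (simp_all add: fun_upd_idem)
  qed
  also have "\<dots> = (\<Sum>u\<in>UNIV. ?g (u(z := False))) + (\<Sum>u\<in>UNIV. ?g (u(z := True)))"
    by (simp only: sum.distrib)
  finally have eq: "2 * (\<Sum>u\<in>UNIV. ?g u) = (\<Sum>u\<in>UNIV. ?g (u(z := False))) + (\<Sum>u\<in>UNIV. ?g (u(z := True)))" .
  have e0: "expect g = (\<Sum>u\<in>UNIV. ?g u) / ?N" by (simp add: expect_def)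
  have e1: "expect (cofactor g z c) = (\<Sum>u\<in>UNIV. ?g (u(z := c))) / ?N" for c
    by (simp add: expect_def cofactor_def)
  define A where "A = (\<Sum>u\<in>UNIV. ?g u)"
  define B where "B = (\<Sum>u\<in>UNIV. ?g (u(z := False)))"
  define C where "C = (\<Sum>u\<in>UNIV. ?g (u(z := True)))"
  have eq': "2 * A = B + C" using eq unfolding A_def B_def C_def .
  have "B / ?N / 2 + C / ?N / 2 = (B + C) / 2 / ?N" by (simp add: field_simps)
  also have "\<dots> = A / ?N" using eq'[symmetric] by simp
  finally show ?thesis unfolding e0 e1 A_def B_def C_def by simp
qed

lemma E_additive: "cofactor_additive (\<lambda>x f. expect (bderiv x (f :: ('x::finite) bfun)))"
  unfolding cofactor_additive_def
proof (intro allI impI)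
  fix f :: "'x bfun" and x z :: 'x
  assume "x \<noteq> z"
  thus "expect (bderiv x f) = expect (bderiv x (cofactor f z False)) / 2 + expect (bderiv x (cofactor f z True)) / 2"
    using expect_split[of "bderiv x f" z] by (simp add: bderiv_cof)
qed

lemma uniq_aux:
  fixes I :: "('x::finite) \<Rightarrow> 'x bfun \<Rightarrow> real"
  assumes dic: "\<forall>x. I x (var x) = 1 \<and> I x (neg (var x)) = 1"
    and dum: "\<forall>x f. x \<notin> dep f \<longrightarrow> I x f = 0"
    and add: "cofactor_additive I"
  assumes "finite S"
  shows "\<forall>f. (\<forall>u v. (\<forall>y\<in>insert x S. u y = v y) \<longrightarrow> f u = f v)
           \<longrightarrow> I x f = expect (bderiv x f)"
  using \<open>finite S\<close>
proof (induction S rule: finite_induct)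
  case empty
  show ?case
  proof (intro allI impI)
    fix f :: "'x bfun"
    assume h: "\<forall>u v. (\<forall>y\<in>insert x {}. u y = v y) \<longrightarrow> f u = f v"
    obtain a b where ab: "a = f (\<lambda>_. True)" "b = f (\<lambda>_. False)" by blast
    have fT: "f u = a" if "u x" for u using h[rule_format, of u "\<lambda>_. True"] that ab by auto
    have fF: "f u = b" if "\<not> u x" for u using h[rule_format, of u "\<lambda>_. False"] that ab by auto
    consider "a = b" | "a" "\<not> b" | "\<not> a" "b" by blast
    then show "I x f = expect (bderiv x f)"
    proof cases
      case 1
      have "x \<notin> dep f"
        unfolding dep_def cofactor_def using fT fF 1 by (auto simp: fun_eq_iff)
      thus ?thesis using dum by (simp add: bderiv_nodep expect_const)
    next
      case 2
      have "f = var x" unfolding var_def using fT fF 2 by (auto simp: fun_eq_iff)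
      thus ?thesis using dic by (simp add: bderiv_var expect_const)
    next
      case 3
      have "f = neg (var x)" unfolding var_def neg_def using fT fF 3 by (auto simp: fun_eq_iff)
      thus ?thesis using dic by (simp add: bderiv_neg expect_const)
    qed
  qed
next
  case (insert z S)
  show ?case
  proof (intro allI impI)
    fix f :: "'x bfun"
    assume h: "\<forall>u v. (\<forall>y\<in>insert x (insert z S). u y = v y) \<longrightarrow> f u = f v"
    show "I x f = expect (bderiv x f)"
    proof (cases "z = x")
      case True
      then show ?thesis using insert.IH h by (simp add: insert_absorb2)
    next
      case False
      have c: "I x (cofactor f z c) = expect (bderiv x (cofactor f z c))" for c
      proof -
        have "\<forall>u v. (\<forall>y\<in>insert x S. u y = v y) \<longrightarrow> cofactor f z c u = cofactor f z c v"
          unfolding cofactor_def using h by auto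
        thus ?thesis using insert.IH by blast
      qed
      have "I x f = I x (cofactor f z False) / 2 + I x (cofactor f z True) / 2"
        using add False unfolding cofactor_additive_def by (metis (no_types))
      moreover have "expect (bderiv x f) = expect (bderiv x (cofactor f z False)) / 2
                        + expect (bderiv x (cofactor f z True)) / 2"
        using E_additive False unfolding cofactor_additive_def by (metis (no_types))
      ultimately show ?thesis using c by simp
    qed
  qed
qed

theorem mainTheorem7:
  fixes I :: "('x::finite) \<Rightarrow> 'x bfun \<Rightarrow> real"
  shows "((\<forall>x. I x (var x) = 1 \<and> I x (neg (var x)) = 1)
          \<and> (\<forall>x f. x \<notin> dep f \<longrightarrow> I x f = 0)
          \<and> cofactor_additive I)
         \<longleftrightarrow> (\<forall>x f. I x f = expect (bderiv x f))"
proof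
  assume a: "(\<forall>x. I x (var x) = 1 \<and> I x (neg (var x)) = 1)
          \<and> (\<forall>x f. x \<notin> dep f \<longrightarrow> I x f = 0)
          \<and> cofactor_additive I"
  show "\<forall>x f. I x f = expect (bderiv x f)"
  proof (intro allI)
    fix x :: 'x and f :: "'x bfun"
    have "\<forall>f. (\<forall>u v. (\<forall>y\<in>insert x UNIV. u y = v y) \<longrightarrow> f u = f v)
           \<longrightarrow> I x f = expect (bderiv x f)"
      using uniq_aux[of I UNIV x] a by simp
    moreover have "\<forall>u v. (\<forall>y\<in>insert x UNIV. u y = v y) \<longrightarrow> f u = f v"
    proof (intro allI impI)
      fix u v :: "'x \<Rightarrow> bool"
      assume "\<forall>y\<in>insert x UNIV. u y = v y"
      hence "u = v" by (simp add: fun_eq_iff)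
      thus "f u = f v" by simp
    qed
    ultimately show "I x f = expect (bderiv x f)" by blast
  qed
next
  assume e: "\<forall>x f. I x f = expect (bderiv x f)"
  have a1: "\<forall>x. I x (var x) = 1 \<and> I x (neg (var x)) = 1"
    using e by (simp add: bderiv_var bderiv_neg expect_const)
  have a2: "\<forall>x f. x \<notin> dep f \<longrightarrow> I x f = 0"
    using e by (simp add: bderiv_nodep expect_const)
  have "I = (\<lambda>x f. expect (bderiv x f))" using e by (simp add: fun_eq_iff)
  hence a3: "cofactor_additive I" using E_additive by simp
  show "(\<forall>x. I x (var x) = 1 \<and> I x (neg (var x)) = 1)
          \<and> (\<forall>x f. x \<notin> dep f \<longrightarrow> I x f = 0)
          \<and> cofactor_additive I" using a1 a2 a3 by blast
qed

end
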